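(* Let $G$ be a graph of order $n$ with a clique partition $F$ of size $|F|=k$, and let $1\le i\le\min\{n,k\}$. Let $q_i(G)$ denote the $i$th largest eigenvalue of the signless Laplacian $Q(G)=D(G)+\mathcal A(G)$. (i) If $G$ is $t$ clique-regular with respect to $F$, then $q_i(G)-\lambda_i(G)\ge t$. (ii) If $G$ is $s$ clique-uniform with respect to $F$, then $q_i(G)-\lambda_i(P_G)\ge s$.
   Context: All graphs are finite and simple; $\mathcal A(G)$ is the adjacency matrix, $D(G)$ the diagonal matrix of vertex degrees, and $\lambda_i(\cdot)$ denotes the $i$th largest adjacency eigenvalue. A clique partition of $G$ is a set $F=\{C_1,\dots,C_k\}$ of cliques such that every edge lies in exactly one $C_j$. The clique-degree of a vertex is the number of cliques of $F$ containing it; $G$ is $t$ clique-regular if every clique-degree equals $t$, and $s$ clique-uniform if $|C_j|=s$ for all $j$. The clique partition graph $P_G$ has vertex set $\{1,\dots,k\}$ with $i\neq j$ adjacent iff $C_i\cap C_j\neq\emptyset$. *)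

theory Defs
  imports Complex_Main "Jordan_Normal_Form.Char_Poly"
begin

definition simple_graph :: "nat \<Rightarrow> nat set set \<Rightarrow> bool" where
  "simple_graph n E \<longleftrightarrow> (\<forall>e\<in>E. \<exists>u v. e = {u, v} \<and> u < n \<and> v < n \<and> u \<noteq> v)"

definition adj_mat :: "nat \<Rightarrow> nat set set \<Rightarrow> real mat" where
  "adj_mat n E = mat n n (\<lambda>(i, j). if {i, j} \<in> E then 1 else 0)"

definition degree :: "nat set set \<Rightarrow> nat \<Rightarrow> nat" where
  "degree E v = card {u. {u, v} \<in> E}"

definition deg_mat :: "nat \<Rightarrow> nat set set \<Rightarrow> real mat" where
  "deg_mat n E = mat n n (\<lambda>(i, j). if i = j then real (degree E i) else 0)"

definition signless_laplacian :: "nat \<Rightarrow> nat set set \<Rightarrow> real mat" where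
  "signless_laplacian n E = deg_mat n E + adj_mat n E"

definition is_clique :: "nat set set \<Rightarrow> nat set \<Rightarrow> bool" where
  "is_clique E C \<longleftrightarrow> (\<forall>u\<in>C. \<forall>v\<in>C. u \<noteq> v \<longrightarrow> {u, v} \<in> E)"

definition clique_partition :: "nat \<Rightarrow> nat set set \<Rightarrow> nat set list \<Rightarrow> bool" where
  "clique_partition n E F \<longleftrightarrow> distinct F \<and>
     (\<forall>C\<in>set F. C \<subseteq> {..<n} \<and> card C \<ge> 2 \<and> is_clique E C) \<and>
     (\<forall>e\<in>E. \<exists>!C. C \<in> set F \<and> e \<subseteq> C)"

definition clique_degree :: "nat set list \<Rightarrow> nat \<Rightarrow> nat" where
  "clique_degree F v = card {C \<in> set F. v \<in> C}"

definition clique_regular :: "nat \<Rightarrow> nat set list \<Rightarrow> nat \<Rightarrow> bool" where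
  "clique_regular n F t \<longleftrightarrow> (\<forall>v<n. clique_degree F v = t)"

definition clique_uniform :: "nat set list \<Rightarrow> nat \<Rightarrow> bool" where
  "clique_uniform F s \<longleftrightarrow> (\<forall>C\<in>set F. card C = s)"

text \<open>Adjacency matrix of the clique partition graph P_G (vertex j-1 stands for C_j).\<close>
definition partition_graph_adj :: "nat set list \<Rightarrow> real mat" where
  "partition_graph_adj F = mat (length F) (length F)
     (\<lambda>(i, j). if i \<noteq> j \<and> F ! i \<inter> F ! j \<noteq> {} then 1 else 0)"

text \<open>Eigenvalues (with multiplicity) in non-increasing order: the roots of the
  characteristic polynomial (real-rooted for symmetric real matrices).\<close>
definition eigs_desc :: "real mat \<Rightarrow> real list" where
  "eigs_desc A = (THE xs. length xs = dim_row A \<and> sorted_wrt (\<ge>) xs \<and>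
      char_poly A = (\<Prod>x\<leftarrow>xs. [:- x, 1:]))"

text \<open>i-th largest eigenvalue, 1-based.\<close>
definition eig :: "real mat \<Rightarrow> nat \<Rightarrow> real" where
  "eig A i = eigs_desc A ! (i - 1)"

end

theory Submission
  imports Defs "Jordan_Normal_Form.Schur_Decomposition"
begin


lemma sym_real_eigen:
  fixes M :: "real mat"
  assumes M: "M \<in> carrier_mat n n" and sym: "\<And>i j. i<n \<Longrightarrow> j<n \<Longrightarrow> M$$(i,j) = M$$(j,i)" and n: "n > 0"
  shows "\<exists>r v. v \<in> carrier_vec n \<and> v \<bullet> v = 1 \<and> M *\<^sub>v v = r \<cdot>\<^sub>v v"
proof -
  define Mc where "Mc = map_mat complex_of_real M"
  have Mc: "Mc \<in> carrier_mat n n" using M unfolding Mc_def by auto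
  obtain as where cp: "char_poly Mc = (\<Prod>a\<leftarrow>as. [:- a, 1:])" and len: "length as = n"
    using char_poly_factorized[OF Mc] by blast
  obtain z rest where as: "as = z # rest" using len n by (cases as) auto
  have "poly (char_poly Mc) z = 0" unfolding cp as by simp
  hence "eigenvalue Mc z" using eigenvalue_root_char_poly[OF Mc] by simp
  then obtain w where ev: "eigenvector Mc w z" unfolding eigenvalue_def by blast
  have w: "w \<in> carrier_vec n" and w0: "w \<noteq> 0\<^sub>v n" and Mw: "Mc *\<^sub>v w = z \<cdot>\<^sub>v w"
    using ev Mc unfolding eigenvector_def by auto
  define a where "a = (\<Sum>i<n. \<Sum>j<n. cnj (w$i) * of_real (M$$(i,j)) * w$j)"
  define S where "S = (\<Sum>i<n. cnj (w$i) * w$i)"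
  have rowi: "(\<Sum>j<n. of_real (M$$(i,j)) * w$j) = z * w$i" if i: "i < n" for i
  proof -
    have "(Mc *\<^sub>v w) $ i = z * w$i" using Mw i w by simp
    moreover have "(Mc *\<^sub>v w) $ i = (\<Sum>j<n. of_real (M$$(i,j)) * w$j)"
      using i M w unfolding Mc_def by (auto simp: scalar_prod_def row_def atLeast0LessThan intro!: sum.cong)
    ultimately show ?thesis by simp
  qed
  have aS: "a = z * S"
  proof -
    have "a = (\<Sum>i<n. cnj (w$i) * (\<Sum>j<n. of_real (M$$(i,j)) * w$j))"
      unfolding a_def by (simp add: sum_distrib_left mult.assoc)
    also have "\<dots> = (\<Sum>i<n. cnj (w$i) * (z * w$i))" by (intro sum.cong refl, simp add: rowi)
    also have "\<dots> = z * S" unfolding S_def by (simp add: sum_distrib_left algebra_simps)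
    finally show ?thesis .
  qed
  have ca: "cnj a = a"
  proof -
    have "cnj a = (\<Sum>i<n. \<Sum>j<n. w$i * of_real (M$$(i,j)) * cnj (w$j))"
      unfolding a_def by (simp add: cnj_sum)
    also have "\<dots> = (\<Sum>j<n. \<Sum>i<n. w$i * of_real (M$$(i,j)) * cnj (w$j))"
      by (rule sum.swap)
    also have "\<dots> = a" unfolding a_def
      by (intro sum.cong refl, simp add: sym mult.commute mult.left_commute)
    finally show ?thesis .
  qed
  have Sreal: "S = of_real (\<Sum>i<n. (cmod (w$i))^2)"
    unfolding S_def by (simp add: complex_norm_square mult.commute del: of_real_power)
  obtain i where i: "i < n" "w$i \<noteq> 0" using w w0 by (metis eq_vecI carrier_vecD index_zero_vec)
  have "(\<Sum>i<n. (cmod (w$i))^2) > 0"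
  proof -
    have "(\<Sum>i<n. (cmod (w$i))^2) \<ge> (cmod (w$i))^2"
      by (rule member_le_sum) (use i in auto)
    moreover have "(cmod (w$i))^2 > 0" using i by simp
    ultimately show ?thesis by linarith
  qed
  hence S0: "S \<noteq> 0" unfolding Sreal by (metis of_real_eq_0_iff less_irrefl)
  have cS: "cnj S = S" unfolding Sreal by (simp only: Complex.complex_cnj_complex_of_real)
  have "z = a / S" using aS S0 by simp
  hence "cnj z = z" using ca cS by simp
  hence zr: "z = of_real (Re z)" by (metis Reals_cnj_iff of_real_Re)
  define r where "r = Re z"
  have "complex_of_real (poly (char_poly M) r) = poly (map_poly of_real (char_poly M)) (of_real r)"
    by (simp add: of_real_hom.poly_map_poly)
  also have "map_poly of_real (char_poly M) = char_poly Mc"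
    unfolding Mc_def by (rule of_real_hom.char_poly_hom[symmetric, OF M])
  also have "poly (char_poly Mc) (of_real r) = 0" using \<open>poly (char_poly Mc) z = 0\<close> zr r_def by simp
  finally have "poly (char_poly M) r = 0" by simp
  hence "eigenvalue M r" using eigenvalue_root_char_poly[OF M] by simp
  then obtain u where "eigenvector M u r" unfolding eigenvalue_def by blast
  hence u: "u \<in> carrier_vec n" and u0: "u \<noteq> 0\<^sub>v n" and Mu: "M *\<^sub>v u = r \<cdot>\<^sub>v u"
    using M unfolding eigenvector_def by auto
  have uu: "u \<bullet> u > 0"
  proof -
    obtain j where j: "j < n" "u$j \<noteq> 0" using u u0 by (metis eq_vecI carrier_vecD index_zero_vec)
    have "u \<bullet> u = (\<Sum>i<n. (u$i)^2)" using u by (simp add: scalar_prod_def atLeast0LessThan power2_eq_square)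
    also have "\<dots> \<ge> (u$j)^2" by (rule member_le_sum) (use j in auto)
    finally show ?thesis using j by (smt (verit) zero_less_power2)
  qed
  define v where "v = (1 / sqrt (u \<bullet> u)) \<cdot>\<^sub>v u"
  have v: "v \<in> carrier_vec n" using u unfolding v_def by simp
  have "v \<bullet> v = (1 / sqrt (u \<bullet> u))^2 * (u \<bullet> u)"
    unfolding v_def using u by (simp add: power2_eq_square)
  also have "\<dots> = 1" using uu by (simp add: power_divide)
  finally have vv: "v \<bullet> v = 1" .
  have "M *\<^sub>v v = r \<cdot>\<^sub>v v" unfolding v_def using M u Mu
    by (simp add: mult_mat_vec smult_smult_assoc mult.commute)
  with v vv show ?thesis by blast
qed

lemma real_conj_vec[simp]: "conjugate (v :: real vec) = v"
  by (intro eq_vecI) auto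

definition orthonormal :: "nat \<Rightarrow> real vec list \<Rightarrow> bool" where
  "orthonormal n vs \<longleftrightarrow> set vs \<subseteq> carrier_vec n \<and>
     (\<forall>i<length vs. \<forall>j<length vs. vs!i \<bullet> vs!j = (if i = j then 1 else 0))"

lemma ortho_complete:
  assumes v: "v \<in> carrier_vec n" and vv: "v \<bullet> v = 1"
  shows "\<exists>us. length us = n \<and> orthonormal n us \<and> hd us = v"
proof -
  interpret cof_vec_space n "TYPE(real)" .
  have v0: "v \<noteq> 0\<^sub>v n" using vv v by auto
  define b where "b = basis_completion v"
  note bc = basis_completion[OF v v0, folded b_def]
  define ws where "ws = gram_schmidt n b"
  note gs = gram_schmidt_result[OF bc(2) bc(4) bc(5) ws_def]
  have n: "n > 0" using v v0 by (metis carrier_vecD eq_vecI index_zero_vec(2) less_nat_zero_code neq0_conv)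
  obtain vs where bv: "b = v # vs" using bc(6) bc(7) n by (cases b) auto
  have hws: "hd ws = v" unfolding ws_def bv using v by simp
  have lws: "length ws = n" using gs bc by simp
  have wsc: "\<And>i. i < n \<Longrightarrow> ws!i \<in> carrier_vec n" using gs(3) lws by auto
  have orth: "\<And>i j. i < n \<Longrightarrow> j < n \<Longrightarrow> ws!i \<bullet> ws!j = 0 \<longleftrightarrow> i \<noteq> j"
    using gs(2) lws unfolding corthogonal_def by simp
  define us where "us = map (\<lambda>w. (1 / sqrt (w \<bullet> w)) \<cdot>\<^sub>v w) ws"
  have pos: "ws!i \<bullet> ws!i > 0" if "i < n" for i
  proof -
    have "ws!i \<bullet> ws!i \<noteq> 0" using orth that by simp
    moreover have "ws!i \<bullet> ws!i \<ge> 0" using wsc[OF that]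
      by (simp add: scalar_prod_def sum_nonneg)
    ultimately show ?thesis by simp
  qed
  have "us!i \<bullet> us!j = (if i = j then 1 else 0)" if ij: "i < n" "j < n" for i j
  proof -
    have "us!i \<bullet> us!j = (1 / sqrt (ws!i \<bullet> ws!i)) * (1 / sqrt (ws!j \<bullet> ws!j)) * (ws!i \<bullet> ws!j)"
      unfolding us_def using ij lws wsc[OF ij(1)] wsc[OF ij(2)] by simp
    also have "\<dots> = (if i = j then 1 else 0)"
      using orth[OF ij] pos[OF ij(1)] by (auto simp: real_sqrt_mult[symmetric])
    finally show ?thesis .
  qed
  moreover have "set us \<subseteq> carrier_vec n" unfolding us_def using gs(3) by auto
  moreover have "hd us = v" unfolding us_def using hws vv lws n
    by (cases ws) auto
  moreover have "length us = n" unfolding us_def using lws by simp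
  ultimately show ?thesis unfolding orthonormal_def by auto
qed

lemma row_vCons:
  assumes "A \<in> carrier_mat nr (Suc m)" "i < nr"
  shows "row A i = vCons (A$$(i,0)) (vec m (\<lambda>j. A$$(i,Suc j)))"
  using assms by (auto simp: row_def vec_Suc o_def)

lemma block_mult:
  assumes A: "A \<in> carrier_mat (Suc m) (Suc m)"
    and c0: "\<And>i. i < Suc m \<Longrightarrow> A$$(i,0) = (if i=0 then r else 0)"
    and r0: "\<And>j. j < Suc m \<Longrightarrow> A$$(0,j) = (if j=0 then r else 0)"
    and u: "u \<in> carrier_vec m"
  shows "A *\<^sub>v vCons a u = vCons (r*a) (mat m m (\<lambda>(i,j). A$$(Suc i, Suc j)) *\<^sub>v u)"
proof (rule eq_vecI)
  show "dim_vec (A *\<^sub>v vCons a u) = dim_vec (vCons (r*a) (mat m m (\<lambda>(i,j). A$$(Suc i, Suc j)) *\<^sub>v u))"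
    using A by simp
  fix i assume i: "i < dim_vec (vCons (r*a) (mat m m (\<lambda>(i,j). A$$(Suc i, Suc j)) *\<^sub>v u))"
  hence i': "i < Suc m" by simp
  have "(A *\<^sub>v vCons a u) $ i = row A i \<bullet> vCons a u" using A i' by simp
  also have "\<dots> = A$$(i,0) * a + vec m (\<lambda>j. A$$(i,Suc j)) \<bullet> u"
    unfolding row_vCons[OF A i'] by simp
  also have "\<dots> = vCons (r*a) (mat m m (\<lambda>(i,j). A$$(Suc i, Suc j)) *\<^sub>v u) $ i"
  proof (cases i)
    case 0
    have "vec m (\<lambda>j. A$$(0,Suc j)) = 0\<^sub>v m" using r0 by (intro eq_vecI) auto
    then show ?thesis using 0 c0 u by simp
  next
    case (Suc i0)
    then have "i0 < m" using i' by simp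
    have "vec m (\<lambda>j. mat m m (\<lambda>(i, j). A $$ (Suc i, Suc j)) $$ (i0, j)) = vec m (\<lambda>j. A $$ (Suc i0, Suc j))"
      by (intro eq_vecI) (use \<open>i0 < m\<close> in auto)
    then show ?thesis using Suc c0[OF i'] u \<open>i0 < m\<close>
      by (simp add: row_def)
  qed
  finally show "(A *\<^sub>v vCons a u) $ i = vCons (r*a) (mat m m (\<lambda>(i,j). A$$(Suc i, Suc j)) *\<^sub>v u) $ i" .
qed

definition eigbasis :: "real mat \<Rightarrow> nat \<Rightarrow> real vec list \<Rightarrow> real list \<Rightarrow> bool" where
  "eigbasis M n vs es \<longleftrightarrow> length vs = n \<and> length es = n \<and> orthonormal n vs \<and>
     (\<forall>j<n. M *\<^sub>v (vs!j) = (es!j) \<cdot>\<^sub>v (vs!j))"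

lemma spectral:
  fixes M :: "real mat"
  assumes "M \<in> carrier_mat n n" and "\<And>i j. i<n \<Longrightarrow> j<n \<Longrightarrow> M$$(i,j) = M$$(j,i)"
  shows "\<exists>vs es. eigbasis M n vs es"
  using assms
proof (induction n arbitrary: M)
  case 0
  then show ?case by (auto simp: eigbasis_def orthonormal_def)
next
  case (Suc m)
  let ?n = "Suc m"
  have M: "M \<in> carrier_mat ?n ?n" using Suc.prems by simp
  have Msym: "transpose_mat M = M" using Suc.prems(1) Suc.prems(2) by (intro eq_matI) auto
  obtain r v where v: "v \<in> carrier_vec ?n" and vv: "v \<bullet> v = 1" and Mv: "M *\<^sub>v v = r \<cdot>\<^sub>v v"
    using sym_real_eigen[OF M Suc.prems(2)] by blast
  obtain us where lus: "length us = ?n" and on: "orthonormal ?n us" and hus: "hd us = v"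
    using ortho_complete[OF v vv] by blast
  have usc: "\<And>i. i < ?n \<Longrightarrow> us!i \<in> carrier_vec ?n" using on lus unfolding orthonormal_def by auto
  have usd: "\<And>i j. i < ?n \<Longrightarrow> j < ?n \<Longrightarrow> us!i \<bullet> us!j = (if i = j then 1 else 0)"
    using on lus unfolding orthonormal_def by auto
  have us0: "us!0 = v" using hus lus by (cases us) auto
  define W where "W = mat_of_cols ?n us"
  have W: "W \<in> carrier_mat ?n ?n" unfolding W_def using mat_of_cols_carrier(1)[of ?n us] lus by simp
  have colW: "\<And>j. j < ?n \<Longrightarrow> col W j = us!j" unfolding W_def using lus usc by simp
  have WtW: "transpose_mat W * W = 1\<^sub>m ?n"
    by (rule eq_matI) (use W in \<open>auto simp: colW usd\<close>)
  have WWt: "W * transpose_mat W = 1\<^sub>m ?n"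
    by (rule mat_mult_left_right_inverse[OF _ W WtW]) (use W in auto)
  define A where "A = transpose_mat W * (M * W)"
  have A: "A \<in> carrier_mat ?n ?n" unfolding A_def using W M by auto
  have Aij: "A$$(i,j) = us!i \<bullet> (M *\<^sub>v us!j)" if "i < ?n" "j < ?n" for i j
  proof -
    have "A$$(i,j) = row (transpose_mat W) i \<bullet> col (M * W) j"
      unfolding A_def using that W M by simp
    also have "row (transpose_mat W) i = us!i" using that W colW by simp
    also have "col (M * W) j = M *\<^sub>v col W j" by (rule col_mult2[OF M W that(2)])
    also have "col W j = us!j" using colW that by simp
    finally show ?thesis .
  qed
  have Asym: "A$$(i,j) = A$$(j,i)" if "i < ?n" "j < ?n" for i j
  proof -
    have "A$$(i,j) = (transpose_mat M *\<^sub>v us!i) \<bullet> us!j"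
      unfolding Aij[OF that] using transpose_vec_mult_scalar[OF M usc[OF that(2)] usc[OF that(1)]] by simp
    also have "\<dots> = us!j \<bullet> (M *\<^sub>v us!i)" unfolding Msym
      by (rule comm_scalar_prod[of _ ?n]) (use M usc that in auto)
    finally show ?thesis using Aij that by simp
  qed
  have c0: "A$$(i,0) = (if i=0 then r else 0)" if "i < ?n" for i
    using Aij[OF that] Mv us0 usd[OF that, of 0] usc[OF that] v by simp
  have r0: "A$$(0,j) = (if j=0 then r else 0)" if "j < ?n" for j
    using c0[OF that] Asym[OF that, of 0] by simp
  define A3 where "A3 = mat m m (\<lambda>(i,j). A$$(Suc i, Suc j))"
  have A3: "A3 \<in> carrier_mat m m" unfolding A3_def by simp
  have A3sym: "\<And>i j. i<m \<Longrightarrow> j<m \<Longrightarrow> A3$$(i,j) = A3$$(j,i)"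
    unfolding A3_def using Asym by simp
  obtain vs3 es3 where eb3: "eigbasis A3 m vs3 es3" using Suc.IH[OF A3 A3sym] by blast
  have vs3c: "\<And>i. i < m \<Longrightarrow> vs3!i \<in> carrier_vec m" and lvs3: "length vs3 = m"
    and les3: "length es3 = m"
    and vs3d: "\<And>i j. i < m \<Longrightarrow> j < m \<Longrightarrow> vs3!i \<bullet> vs3!j = (if i = j then 1 else 0)"
    and vs3e: "\<And>j. j < m \<Longrightarrow> A3 *\<^sub>v (vs3!j) = (es3!j) \<cdot>\<^sub>v (vs3!j)"
    using eb3 unfolding eigbasis_def orthonormal_def by auto
  define ps where "ps = vCons 1 (0\<^sub>v m) # map (\<lambda>u. vCons 0 u) vs3"
  define es where "es = r # es3"
  have lps: "length ps = ?n" unfolding ps_def using lvs3 by simp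
  have psc: "ps!j \<in> carrier_vec ?n" if "j < ?n" for j
    using that vs3c lvs3 unfolding ps_def by (cases j) auto
  have psd: "ps!i \<bullet> ps!j = (if i = j then 1 else 0)" if "i < ?n" "j < ?n" for i j
    using that vs3c vs3d lvs3 unfolding ps_def
    by (cases i; cases j) auto
  have pse: "A *\<^sub>v ps!j = es!j \<cdot>\<^sub>v ps!j" if "j < ?n" for j
  proof (cases j)
    case 0
    have "A *\<^sub>v ps!j = vCons r (A3 *\<^sub>v 0\<^sub>v m)" unfolding ps_def 0
      using block_mult[OF A c0 r0, of "0\<^sub>v m" 1] A3_def[symmetric] by simp
    also have "\<dots> = es!j \<cdot>\<^sub>v ps!j" unfolding ps_def es_def 0
      by (intro eq_vecI) (use A3 in \<open>auto simp: vec_index_vCons\<close>)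
    finally show ?thesis .
  next
    case (Suc j0)
    then have j0: "j0 < m" using that by simp
    have "A *\<^sub>v ps!j = vCons 0 (A3 *\<^sub>v vs3!j0)" unfolding ps_def Suc A3_def
      using block_mult[OF A c0 r0 vs3c[OF j0], of 0] j0 lvs3 by simp
    also have "\<dots> = es!j \<cdot>\<^sub>v ps!j" unfolding ps_def es_def Suc using vs3e[OF j0] j0 lvs3 vs3c[OF j0]
      by (auto simp: vec_Suc[symmetric] intro!: eq_vecI simp: vec_index_vCons)
    finally show ?thesis .
  qed
  define vs where "vs = map (\<lambda>p. W *\<^sub>v p) ps"
  have MW: "M *\<^sub>v (W *\<^sub>v p) = W *\<^sub>v (A *\<^sub>v p)" if "p \<in> carrier_vec ?n" for p
  proof -
    have "W * A = (W * transpose_mat W) * (M * W)" unfolding A_def using W M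
      by (subst assoc_mult_mat[of W ?n ?n "transpose_mat W" ?n "M * W" ?n]) auto
    also have "\<dots> = M * W" unfolding WWt using M W by simp
    finally have "W * A = M * W" .
    then show ?thesis using that W A M by (metis assoc_mult_mat_vec)
  qed
  have WW: "(W *\<^sub>v p) \<bullet> (W *\<^sub>v q) = p \<bullet> q" if "p \<in> carrier_vec ?n" "q \<in> carrier_vec ?n" for p q
  proof -
    have "(W *\<^sub>v p) \<bullet> (W *\<^sub>v q) = (transpose_mat W *\<^sub>v (W *\<^sub>v p)) \<bullet> q"
      using transpose_vec_mult_scalar[OF W that(2), of "W *\<^sub>v p"] W that by simp
    also have "transpose_mat W *\<^sub>v (W *\<^sub>v p) = p"
      using W that by (metis WtW assoc_mult_mat_vec carrier_matI index_transpose_mat(2,3) carrier_matD one_mult_mat_vec)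
    finally show ?thesis .
  qed
  have "eigbasis M ?n vs es"
    unfolding eigbasis_def orthonormal_def
  proof (intro conjI allI impI)
    show "length vs = ?n" unfolding vs_def using lps by simp
    show "length es = ?n" unfolding es_def using les3 by simp
    show "set vs \<subseteq> carrier_vec ?n" unfolding vs_def using W lps psc
      by (auto simp: in_set_conv_nth)
    fix i j assume "i < length vs" "j < length vs"
    then show "vs!i \<bullet> vs!j = (if i = j then 1 else 0)"
      unfolding vs_def using lps psc psd WW by simp
  next
    fix j assume j: "j < ?n"
    show "M *\<^sub>v vs!j = es!j \<cdot>\<^sub>v vs!j" unfolding vs_def using j lps MW[OF psc[OF j]] pse[OF j] W psc[OF j]
      by (simp add: mult_mat_vec)
  qed
  then show ?case by blast
qed



lemma eigbasis_carrier: "eigbasis M n vs es \<Longrightarrow> j < n \<Longrightarrow> vs!j \<in> carrier_vec n"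
  unfolding eigbasis_def orthonormal_def by auto

lemma eigbasis_dot: "eigbasis M n vs es \<Longrightarrow> i < n \<Longrightarrow> j < n \<Longrightarrow> vs!i \<bullet> vs!j = (if i = j then 1 else 0)"
  unfolding eigbasis_def orthonormal_def by auto

lemma eigbasis_eq: "eigbasis M n vs es \<Longrightarrow> j < n \<Longrightarrow> M *\<^sub>v (vs!j) = (es!j) \<cdot>\<^sub>v (vs!j)"
  unfolding eigbasis_def by auto

lemma eigbasis_char_poly:
  assumes M: "M \<in> carrier_mat n n" and eb: "eigbasis M n vs es"
  shows "char_poly M = (\<Prod>e\<leftarrow>es. [:- e, 1:])"
proof -
  have lvs: "length vs = n" and les: "length es = n" using eb unfolding eigbasis_def by auto
  define V where "V = mat_of_cols n vs"
  have V: "V \<in> carrier_mat n n" unfolding V_def using mat_of_cols_carrier(1)[of n vs] lvs by simp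
  have colV: "\<And>j. j < n \<Longrightarrow> col V j = vs!j" unfolding V_def using lvs eigbasis_carrier[OF eb] by simp
  have VtV: "transpose_mat V * V = 1\<^sub>m n"
    by (rule eq_matI) (use V in \<open>auto simp: colV eigbasis_dot[OF eb]\<close>)
  have VVt: "V * transpose_mat V = 1\<^sub>m n"
    by (rule mat_mult_left_right_inverse[OF _ V VtV]) (use V in auto)
  define D where "D = mat n n (\<lambda>(i,j). if i = j then es!i else 0)"
  have D: "D \<in> carrier_mat n n" unfolding D_def by simp
  have MV: "M * V = V * D"
  proof (rule eq_matI)
    fix i j assume ij: "i < dim_row (V * D)" "j < dim_col (V * D)"
    hence i: "i < n" and j: "j < n" using V D by auto
    have "col D j = es!j \<cdot>\<^sub>v unit_vec n j" unfolding D_def using j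
      by (intro eq_vecI) (auto simp: unit_vec_def)
    moreover have Vu: "V *\<^sub>v unit_vec n j = col V j"
      by (intro eq_vecI) (use V j in \<open>auto simp: scalar_prod_right_unit\<close>)
    ultimately have "col (V * D) j = es!j \<cdot>\<^sub>v vs!j"
    proof -
      assume cD: "col D j = es!j \<cdot>\<^sub>v unit_vec n j"
      have "col (V * D) j = V *\<^sub>v col D j" by (rule col_mult2[OF V D j])
      also have "\<dots> = V *\<^sub>v (es!j \<cdot>\<^sub>v unit_vec n j)" unfolding cD ..
      also have "\<dots> = es!j \<cdot>\<^sub>v (V *\<^sub>v unit_vec n j)" by (rule mult_mat_vec[OF V]) simp
      also have "\<dots> = es!j \<cdot>\<^sub>v vs!j" unfolding Vu colV[OF j] ..
      finally show ?thesis .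
    qed
    moreover have "col (M * V) j = es!j \<cdot>\<^sub>v vs!j"
    proof -
      have "col (M * V) j = M *\<^sub>v col V j" by (rule col_mult2[OF M V j])
      also have "\<dots> = es!j \<cdot>\<^sub>v vs!j" unfolding colV[OF j] by (rule eigbasis_eq[OF eb j])
      finally show ?thesis .
    qed
    ultimately have "col (M * V) j = col (V * D) j" by simp
    then show "(M * V) $$ (i, j) = (V * D) $$ (i, j)"
      by (metis M V D i j carrier_matD(1,2) col_def index_mult_mat(2,3) index_vec)
  qed (use M V D in auto)
  have "M = V * D * transpose_mat V"
  proof -
    have "M = M * (V * transpose_mat V)" unfolding VVt using M by (rule right_mult_one_mat[symmetric])
    also have "\<dots> = (M * V) * transpose_mat V"
      by (rule assoc_mult_mat[symmetric, of _ n n _ n _ n]) (use M V in auto)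
    finally show ?thesis using MV by simp
  qed
  hence "similar_mat_wit M D V (transpose_mat V)"
    unfolding similar_mat_wit_def Let_def using M V D VtV VVt by auto
  hence "similar_mat M D" unfolding similar_mat_def by blast
  hence "char_poly M = char_poly D" by (rule char_poly_similar)
  also have "\<dots> = (\<Prod>a\<leftarrow>diag_mat D. [:- a, 1:])"
    by (rule char_poly_upper_triangular[OF D]) (auto simp: upper_triangular_def D_def)
  also have "diag_mat D = es" unfolding diag_mat_def D_def using les
    by (auto intro!: nth_equalityI)
  finally show ?thesis .
qed

lemma prod_lin_mset:
  "(\<Prod>x\<leftarrow>xs. [:- x, 1:]) = (\<Prod>x\<leftarrow>ys. [:- x, 1::real:]) \<Longrightarrow> mset xs = mset ys"
proof (induction xs arbitrary: ys)
  case Nil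
  have "Polynomial.degree (\<Prod>x\<leftarrow>ys. [:- x, 1::real:]) = length ys"
    using degree_linear_factors[of uminus ys] by simp
  moreover have "(\<Prod>x\<leftarrow>ys. [:- x, 1::real:]) = 1" using Nil by simp
  ultimately have "length ys = 0" by simp
  then show ?case by simp
next
  case (Cons x xs)
  have "poly (\<Prod>x\<leftarrow>ys. [:- x, 1::real:]) x = 0" using Cons.prems[symmetric] by simp
  hence xy: "x \<in> set ys" by (auto simp: poly_prod_list_zero_iff)
  have "[:- x, 1:] * (\<Prod>x\<leftarrow>xs. [:- x, 1:]) = [:- x, 1:] * (\<Prod>x\<leftarrow>remove1 x ys. [:- x, 1::real:])"
    using Cons.prems prod_list_map_remove1[OF xy, of "\<lambda>x. [:- x, 1::real:]"] by simp
  moreover have nz: "[:- x, 1::real:] \<noteq> 0" by simp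
  ultimately have "(\<Prod>x\<leftarrow>xs. [:- x, 1:]) = (\<Prod>x\<leftarrow>remove1 x ys. [:- x, 1::real:])"
    using mult_left_cancel[OF nz] by blast
  hence "mset xs = mset (remove1 x ys)" by (rule Cons.IH)
  hence "mset (x # xs) = add_mset x (mset ys - {#x#})" by (simp only: mset.simps mset_remove1)
  also have "\<dots> = mset ys" using xy by (intro insert_DiffM) simp
  finally show ?case .
qed

lemma eigs_desc_eq:
  assumes M: "M \<in> carrier_mat n n" and cp: "char_poly M = (\<Prod>e\<leftarrow>es. [:- e, 1:])" and les: "length es = n"
  shows "eigs_desc M = rev (sort es)"
  unfolding eigs_desc_def
proof (rule the_equality)
  show "length (rev (sort es)) = dim_row M \<and> sorted_wrt (\<ge>) (rev (sort es)) \<and>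
    char_poly M = (\<Prod>x\<leftarrow>rev (sort es). [:- x, 1:])"
  proof (intro conjI)
    show "length (rev (sort es)) = dim_row M" using M les by simp
    show "sorted_wrt (\<ge>) (rev (sort es))" by (simp add: sorted_wrt_rev)
    have "mset (map (\<lambda>x. [:- x, 1:]) (rev (sort es))) = mset (map (\<lambda>x. [:- x, 1::real:]) es)"
      by (simp only: mset_map mset_rev mset_sort)
    hence "prod_list (map (\<lambda>x. [:- x, 1:]) (rev (sort es))) = prod_list (map (\<lambda>x. [:- x, 1::real:]) es)"
      by (metis prod_mset_prod_list)
    then show "char_poly M = (\<Prod>x\<leftarrow>rev (sort es). [:- x, 1:])" using cp by simp
  qed
  fix xs assume xs: "length xs = dim_row M \<and> sorted_wrt (\<ge>) xs \<and> char_poly M = (\<Prod>x\<leftarrow>xs. [:- x, 1:])"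
  have "mset xs = mset es" by (rule prod_lin_mset) (use xs cp in simp)
  moreover have "sorted (rev xs)" using xs by (simp add: sorted_wrt_rev)
  ultimately have "sort es = rev xs" by (intro properties_for_sort) auto
  then show "xs = rev (sort es)" by simp
qed



lemma orth_cols_dot:
  fixes W :: "real mat"
  assumes W: "W \<in> carrier_mat n m" and WtW: "transpose_mat W * W = 1\<^sub>m m"
    and p: "p \<in> carrier_vec m" and q: "q \<in> carrier_vec m"
  shows "(W *\<^sub>v p) \<bullet> (W *\<^sub>v q) = p \<bullet> q"
proof -
  have "(transpose_mat W *\<^sub>v (W *\<^sub>v p)) \<bullet> q = (W *\<^sub>v p) \<bullet> (W *\<^sub>v q)"
    by (rule transpose_vec_mult_scalar[OF W q]) (use W p in simp)
  hence "(W *\<^sub>v p) \<bullet> (W *\<^sub>v q) = (transpose_mat W *\<^sub>v (W *\<^sub>v p)) \<bullet> q" by simp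
  also have "transpose_mat W *\<^sub>v (W *\<^sub>v p) = (transpose_mat W * W) *\<^sub>v p"
    by (rule assoc_mult_mat_vec[symmetric, of _ m n _ m]) (use W p in auto)
  also have "\<dots> = p" using WtW p by simp
  finally show ?thesis .
qed

lemma sub_eig:
  assumes eb: "eigbasis M n vs es" and M: "M \<in> carrier_mat n n"
    and J: "distinct J" "set J \<subseteq> {..<n}" and b: "b \<in> carrier_vec (length J)"
  defines "W \<equiv> mat_of_cols n (map (\<lambda>l. vs!l) J)"
  shows "W \<in> carrier_mat n (length J)"
    "(W *\<^sub>v b) \<bullet> (W *\<^sub>v b) = (\<Sum>l<length J. (b$l)^2)"
    "(W *\<^sub>v b) \<bullet> (M *\<^sub>v (W *\<^sub>v b)) = (\<Sum>l<length J. es!(J!l) * (b$l)^2)"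
    "M *\<^sub>v (W *\<^sub>v b) = W *\<^sub>v vec (length J) (\<lambda>l. es!(J!l) * b$l)"
proof -
  let ?m = "length J"
  have Jn: "\<And>l. l < ?m \<Longrightarrow> J!l < n" using J(2) nth_mem by blast
  show W: "W \<in> carrier_mat n ?m" unfolding W_def using mat_of_cols_carrier(1)[of n "map (\<lambda>l. vs!l) J"] by simp
  have colW: "col W j = vs!(J!j)" if "j < ?m" for j
    unfolding W_def using that Jn eigbasis_carrier[OF eb] by simp
  have WtW: "transpose_mat W * W = 1\<^sub>m ?m"
  proof (rule eq_matI)
    fix p q assume "p < dim_row (1\<^sub>m ?m)" "q < dim_col (1\<^sub>m ?m)"
    hence pq: "p < ?m" "q < ?m" by auto
    have "(transpose_mat W * W) $$ (p,q) = vs!(J!p) \<bullet> vs!(J!q)" using W pq colW by simp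
    also have "\<dots> = (if p = q then 1 else 0)" using eigbasis_dot[OF eb Jn[OF pq(1)] Jn[OF pq(2)]]
      J(1) pq by (simp add: nth_eq_iff_index_eq)
    finally show "(transpose_mat W * W) $$ (p,q) = 1\<^sub>m ?m $$ (p,q)" using pq by simp
  qed (use W in auto)
  show "(W *\<^sub>v b) \<bullet> (W *\<^sub>v b) = (\<Sum>l<?m. (b$l)^2)"
    using orth_cols_dot[OF W WtW b b] b by (simp add: scalar_prod_def atLeast0LessThan power2_eq_square)
  define D where "D = mat ?m ?m (\<lambda>(i,j). if i = j then es!(J!i) else 0)"
  have D: "D \<in> carrier_mat ?m ?m" unfolding D_def by simp
  have MW: "M * W = W * D"
  proof (rule eq_matI)
    fix i j assume ij: "i < dim_row (W * D)" "j < dim_col (W * D)"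
    hence i: "i < n" and j: "j < ?m" using W D by auto
    have "col D j = es!(J!j) \<cdot>\<^sub>v unit_vec ?m j" unfolding D_def using j
      by (intro eq_vecI) (auto simp: unit_vec_def)
    moreover have Wu: "W *\<^sub>v unit_vec ?m j = col W j"
      by (intro eq_vecI) (use W j in \<open>auto simp: scalar_prod_right_unit\<close>)
    ultimately have "col (W * D) j = es!(J!j) \<cdot>\<^sub>v vs!(J!j)"
    proof -
      assume cD: "col D j = es!(J!j) \<cdot>\<^sub>v unit_vec ?m j"
      have "col (W * D) j = W *\<^sub>v col D j" by (rule col_mult2[OF W D j])
      also have "\<dots> = W *\<^sub>v (es!(J!j) \<cdot>\<^sub>v unit_vec ?m j)" unfolding cD ..
      also have "\<dots> = es!(J!j) \<cdot>\<^sub>v (W *\<^sub>v unit_vec ?m j)" by (rule mult_mat_vec[OF W]) simp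
      also have "\<dots> = es!(J!j) \<cdot>\<^sub>v vs!(J!j)" unfolding Wu colW[OF j] ..
      finally show ?thesis .
    qed
    moreover have "col (M * W) j = es!(J!j) \<cdot>\<^sub>v vs!(J!j)"
    proof -
      have "col (M * W) j = M *\<^sub>v col W j" by (rule col_mult2[OF M W j])
      also have "\<dots> = es!(J!j) \<cdot>\<^sub>v vs!(J!j)" unfolding colW[OF j] by (rule eigbasis_eq[OF eb Jn[OF j]])
      finally show ?thesis .
    qed
    ultimately have "col (M * W) j = col (W * D) j" by simp
    then show "(M * W) $$ (i, j) = (W * D) $$ (i, j)"
      by (metis M W D i j carrier_matD(1,2) col_def index_mult_mat(2,3) index_vec)
  qed (use M W D in auto)
  have Db: "D *\<^sub>v b = vec ?m (\<lambda>l. es!(J!l) * b$l)"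
  proof (rule eq_vecI)
    fix l assume "l < dim_vec (vec ?m (\<lambda>l. es!(J!l) * b$l))"
    hence l: "l < ?m" by simp
    have "row D l = es!(J!l) \<cdot>\<^sub>v unit_vec ?m l" unfolding D_def using l
      by (intro eq_vecI) (auto simp: unit_vec_def)
    then show "(D *\<^sub>v b) $ l = vec ?m (\<lambda>l. es!(J!l) * b$l) $ l" using l D b
      by (simp add: scalar_prod_left_unit)
  qed (use D in simp)
  have MWb: "M *\<^sub>v (W *\<^sub>v b) = W *\<^sub>v (D *\<^sub>v b)"
    using M W D b MW by (metis assoc_mult_mat_vec)
  then show "M *\<^sub>v (W *\<^sub>v b) = W *\<^sub>v vec ?m (\<lambda>l. es!(J!l) * b$l)" unfolding Db .
  from MWb have "(W *\<^sub>v b) \<bullet> (M *\<^sub>v (W *\<^sub>v b)) = b \<bullet> (D *\<^sub>v b)"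
    using orth_cols_dot[OF W WtW b, of "D *\<^sub>v b"] D b by simp
  also have "\<dots> = (\<Sum>l<?m. es!(J!l) * (b$l)^2)" unfolding Db using b
    by (simp add: scalar_prod_def atLeast0LessThan power2_eq_square mult.commute mult.left_commute)
  finally show "(W *\<^sub>v b) \<bullet> (M *\<^sub>v (W *\<^sub>v b)) = (\<Sum>l<?m. es!(J!l) * (b$l)^2)" .
qed


lemma count_desc:
  fixes ds :: "real list"
  assumes s: "sorted_wrt (\<ge>) ds" and k: "k < length ds"
  shows "length (filter (\<lambda>x. x \<le> ds!k) ds) \<ge> length ds - k"
    "length (filter (\<lambda>x. x \<ge> ds!k) ds) \<ge> Suc k"
proof -
  have le: "ds!j \<le> ds!k" if "k \<le> j" "j < length ds" for j
    using s that by (cases "k = j") (auto simp: sorted_wrt_iff_nth_less)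
  have ge: "ds!j \<ge> ds!k" if "j \<le> k" for j
    using s that k by (cases "k = j") (auto simp: sorted_wrt_iff_nth_less)
  have "filter (\<lambda>x. x \<le> ds!k) (drop k ds) = drop k ds"
    by (rule filter_True) (use le in \<open>auto simp: in_set_conv_nth\<close>)
  hence "length (filter (\<lambda>x. x \<le> ds!k) ds) \<ge> length (drop k ds)"
    by (metis append_take_drop_id filter_append length_append le_add2)
  then show "length (filter (\<lambda>x. x \<le> ds!k) ds) \<ge> length ds - k" by simp
  have "filter (\<lambda>x. x \<ge> ds!k) (take (Suc k) ds) = take (Suc k) ds"
    by (rule filter_True) (use ge k in \<open>auto simp: in_set_conv_nth\<close>)
  hence "length (filter (\<lambda>x. x \<ge> ds!k) ds) \<ge> length (take (Suc k) ds)"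
    by (metis append_take_drop_id filter_append length_append le_add1)
  then show "length (filter (\<lambda>x. x \<ge> ds!k) ds) \<ge> Suc k" using k by simp
qed

lemma count_idx:
  fixes es :: "real list"
  shows "length (filter (\<lambda>l. P (es!l)) [0..<length es]) = length (filter P (rev (sort es)))"
proof -
  have "filter (\<lambda>l. P (es!l)) [0..<length es] = filter ((\<lambda>l. P (es!l))) [0..<length es]" ..
  have "length (filter (\<lambda>l. P (es!l)) [0..<length es]) = length (filter P (map (\<lambda>l. es!l) [0..<length es]))"
    by (simp only: filter_map length_map o_def)
  also have "map (\<lambda>l. es!l) [0..<length es] = es" by (rule map_nth)
  also have "length (filter P es) = length (filter P (rev (sort es)))"
  proof -
    have "mset (filter P es) = mset (filter P (rev (sort es)))" by (simp only: mset_filter mset_rev mset_sort)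
    then show ?thesis by (metis size_mset)
  qed
  finally show ?thesis .
qed



lemma dot_pos:
  fixes x :: "real vec"
  assumes x: "x \<in> carrier_vec n" and x0: "x \<noteq> 0\<^sub>v n"
  shows "x \<bullet> x > 0"
proof -
  obtain j where j: "j < n" "x$j \<noteq> 0" using x x0 by (metis eq_vecI carrier_vecD index_zero_vec)
  have "x \<bullet> x = (\<Sum>i<n. (x$i)^2)" using x by (simp add: scalar_prod_def atLeast0LessThan power2_eq_square)
  also have "\<dots> \<ge> (x$j)^2" by (rule member_le_sum) (use j in auto)
  finally show ?thesis using j by (smt (verit) zero_less_power2)
qed

lemma sumsq_pos:
  fixes a :: "real vec"
  assumes a: "a \<in> carrier_vec m" and a0: "a \<noteq> 0\<^sub>v m"
  shows "(\<Sum>l<m. (a$l)^2) > 0"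
  using dot_pos[OF a a0] a by (simp add: scalar_prod_def atLeast0LessThan power2_eq_square)

lemma eig_eq:
  assumes M: "M \<in> carrier_mat n n" and eb: "eigbasis M n vs es"
  shows "eig M i = rev (sort es) ! (i - 1)"
  unfolding eig_def using eigs_desc_eq[OF M eigbasis_char_poly[OF M eb]] eb unfolding eigbasis_def by simp

lemma eig_lower:
  fixes M Y :: "real mat"
  assumes M: "M \<in> carrier_mat n n" and eb: "eigbasis M n vs es"
    and i: "1 \<le> i" "i \<le> n" and Y: "Y \<in> carrier_mat n i"
    and hyp: "\<And>a. a \<in> carrier_vec i \<Longrightarrow> a \<noteq> 0\<^sub>v i \<Longrightarrow>
       Y *\<^sub>v a \<noteq> 0\<^sub>v n \<and> c * ((Y *\<^sub>v a) \<bullet> (Y *\<^sub>v a)) \<le> (Y *\<^sub>v a) \<bullet> (M *\<^sub>v (Y *\<^sub>v a))"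
  shows "c \<le> rev (sort es) ! (i - 1)"
proof -
  have les: "length es = n" using eb unfolding eigbasis_def by simp
  define ds where "ds = rev (sort es)"
  define lam where "lam = ds ! (i - 1)"
  have sd: "sorted_wrt (\<ge>) ds" unfolding ds_def by (simp add: sorted_wrt_rev)
  have lds: "length ds = n" unfolding ds_def using les by simp
  define J where "J = filter (\<lambda>l. es!l \<le> lam) [0..<n]"
  have Jd: "distinct J" and Js: "set J \<subseteq> {..<n}" unfolding J_def by auto
  have "length J = length (filter (\<lambda>x. x \<le> lam) ds)"
    unfolding J_def ds_def using count_idx[of "\<lambda>x. x \<le> lam" es] les by simp
  also have "\<dots> \<ge> length ds - (i - 1)" unfolding lam_def
    by (rule count_desc(1)[OF sd]) (use i lds in simp)
  finally have lJ: "length J \<ge> n - (i - 1)" using lds by simp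
  define m where "m = length J"
  have Jlam: "es!(J!l) \<le> lam" if "l < m" for l
    using that unfolding m_def J_def by (metis (mono_tags, lifting) mem_Collect_eq nth_mem set_filter)
  define W where "W = mat_of_cols n (map (\<lambda>l. vs!l) J)"
  note se = sub_eig[OF eb M Jd Js, folded W_def m_def]
  have W: "W \<in> carrier_mat n m" unfolding W_def m_def using mat_of_cols_carrier(1)[of n "map (\<lambda>l. vs!l) J"] by simp
  have nim: "n < i + m" using lJ i unfolding m_def by linarith
  define Z where "Z = mat (i+m) (i+m) (\<lambda>(r,q). if r < n then (if q < i then Y$$(r,q) else W$$(r,q-i)) else 0)"
  have Zc: "Z \<in> carrier_mat (i+m) (i+m)" unfolding Z_def by simp
  have "Z = mat\<^sub>r (i+m) (i+m) (\<lambda>r. if r = n then 0\<^sub>v (i+m) else row Z r)"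
    by (rule eq_matI) (auto simp: Z_def)
  hence "det Z = 0" using det_row_0[OF nim, of "\<lambda>r. row Z r"] Zc by auto
  then obtain v where v: "v \<in> carrier_vec (i+m)" and v0: "v \<noteq> 0\<^sub>v (i+m)" and Zv: "Z *\<^sub>v v = 0\<^sub>v (i+m)"
    using det_0_iff_vec_prod_zero[OF Zc] by blast
  define a where "a = vec i (\<lambda>q. v$q)"
  define b where "b = vec m (\<lambda>q. - v$(q+i))"
  have a: "a \<in> carrier_vec i" and b: "b \<in> carrier_vec m" unfolding a_def b_def by auto
  have YW: "Y *\<^sub>v a = W *\<^sub>v b"
  proof (rule eq_vecI)
    fix r assume "r < dim_vec (W *\<^sub>v b)"
    hence r: "r < n" using W by simp
    have "0 = (Z *\<^sub>v v) $ r" using Zv r nim by simp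
    also have "\<dots> = (\<Sum>q\<in>{0..<i+m}. Z$$(r,q) * v$q)" using Zc v r nim
      by (simp add: scalar_prod_def row_def)
    also have "\<dots> = (\<Sum>q\<in>{0..<i}. Z$$(r,q) * v$q) + (\<Sum>q\<in>{i..<i+m}. Z$$(r,q) * v$q)"
      by (rule sum.atLeastLessThan_concat[symmetric]) auto
    also have "(\<Sum>q\<in>{0..<i}. Z$$(r,q) * v$q) = (\<Sum>q\<in>{0..<i}. Y$$(r,q) * v$q)"
      by (rule sum.cong) (use r nim in \<open>auto simp: Z_def\<close>)
    also have "(\<Sum>q\<in>{i..<i+m}. Z$$(r,q) * v$q) = (\<Sum>q\<in>{0+i..<m+i}. Z$$(r,q) * v$q)"
      by (simp add: add.commute)
    also have "\<dots> = (\<Sum>q\<in>{0..<m}. Z$$(r,q+i) * v$(q+i))"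
      by (rule sum.shift_bounds_nat_ivl)
    also have "\<dots> = (\<Sum>q\<in>{0..<m}. W$$(r,q) * v$(q+i))"
      by (rule sum.cong) (use r nim in \<open>auto simp: Z_def\<close>)
    finally have eq0: "0 = (\<Sum>q\<in>{0..<i}. Y$$(r,q) * v$q) + (\<Sum>q\<in>{0..<m}. W$$(r,q) * v$(q+i))" .
    have "(Y *\<^sub>v a) $ r = (\<Sum>q\<in>{0..<i}. Y$$(r,q) * v$q)"
      using Y r unfolding a_def by (simp add: scalar_prod_def row_def)
    moreover have "(W *\<^sub>v b) $ r = - (\<Sum>q\<in>{0..<m}. W$$(r,q) * v$(q+i))"
      using W r unfolding b_def by (simp add: scalar_prod_def row_def sum_negf)
    ultimately show "(Y *\<^sub>v a) $ r = (W *\<^sub>v b) $ r" using eq0 by linarith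
  qed (use Y W in simp)
  show ?thesis
  proof (cases "a = 0\<^sub>v i")
    case True
    moreover have "Y *\<^sub>v 0\<^sub>v i = 0\<^sub>v n" by (intro eq_vecI) (use Y in auto)
    ultimately have "W *\<^sub>v b = 0\<^sub>v n" using YW by simp
    hence "(\<Sum>l<m. (b$l)^2) = 0" using se(2)[OF b] by simp
    hence bl: "b$l = 0" if "l < m" for l
      using that by (subst (asm) sum_nonneg_eq_0_iff) auto
    have "v = 0\<^sub>v (i+m)"
    proof (rule eq_vecI)
      fix q assume "q < dim_vec (0\<^sub>v (i+m))"
      hence q: "q < i + m" by simp
      show "v $ q = 0\<^sub>v (i+m) $ q"
      proof (cases "q < i")
        case True
        then show ?thesis using \<open>a = 0\<^sub>v i\<close> q unfolding a_def
          by (metis index_vec index_zero_vec(1))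
      next
        case False
        then have "q - i < m" using q by simp
        then show ?thesis using bl[of "q - i"] False q unfolding b_def by simp
      qed
    qed (use v in simp)
    then show ?thesis using v0 by simp
  next
    case False
    define x where "x = Y *\<^sub>v a"
    from hyp[OF a False] have x0: "x \<noteq> 0\<^sub>v n" and cx: "c * (x \<bullet> x) \<le> x \<bullet> (M *\<^sub>v x)"
      unfolding x_def by auto
    have xc: "x \<in> carrier_vec n" unfolding x_def using Y a by simp
    have "x \<bullet> (M *\<^sub>v x) = (\<Sum>l<m. es!(J!l) * (b$l)^2)" unfolding x_def YW using se(3)[OF b] .
    also have "\<dots> \<le> (\<Sum>l<m. lam * (b$l)^2)"
      by (rule sum_mono) (use Jlam in \<open>auto intro: mult_right_mono\<close>)
    also have "\<dots> = lam * (x \<bullet> x)" unfolding x_def YW se(2)[OF b] by (simp add: sum_distrib_left)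
    finally have "c * (x \<bullet> x) \<le> lam * (x \<bullet> x)" using cx by linarith
    moreover have "x \<bullet> x > 0" by (rule dot_pos[OF xc x0])
    ultimately have "c \<le> lam" by simp
    then show ?thesis unfolding lam_def ds_def .
  qed
qed



lemma dot_nonneg: "(x :: real vec) \<bullet> x \<ge> 0"
  by (simp add: scalar_prod_def sum_nonneg)

lemma top_family:
  assumes eb: "eigbasis M n vs es" and i: "1 \<le> i" "i \<le> n"
  obtains J where "distinct J" "set J \<subseteq> {..<n}" "length J = i"
    "\<And>l. l < i \<Longrightarrow> es!(J!l) \<ge> rev (sort es) ! (i - 1)"
proof -
  have les: "length es = n" using eb unfolding eigbasis_def by simp
  define lam where "lam = rev (sort es) ! (i - 1)"
  define F where "F = filter (\<lambda>l. es!l \<ge> lam) [0..<n]"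
  define J where "J = take i F"
  have sd: "sorted_wrt (\<ge>) (rev (sort es))" by (simp add: sorted_wrt_rev)
  have "length F = length (filter (\<lambda>x. x \<ge> lam) (rev (sort es)))"
    unfolding F_def using count_idx[of "\<lambda>x. x \<ge> lam" es] les by simp
  also have "\<dots> \<ge> Suc (i - 1)" unfolding lam_def
    by (rule count_desc(2)[OF sd]) (use i les in simp)
  finally have lF: "length F \<ge> i" using i by simp
  have "distinct J" "set J \<subseteq> {..<n}" unfolding J_def F_def
    using set_take_subset by (fastforce intro: distinct_take)+
  moreover have "length J = i" unfolding J_def using lF by simp
  moreover have "es!(J!l) \<ge> lam" if "l < i" for l
  proof -
    have "J!l \<in> set F" unfolding J_def using that lF
      by (metis in_set_takeD length_take min.absorb2 nth_mem)
    then show ?thesis unfolding F_def by simp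
  qed
  ultimately show ?thesis using that unfolding lam_def by blast
qed

lemma sym_transpose:
  assumes "M \<in> carrier_mat n n" "transpose_mat M = M" "i < n" "j < n"
  shows "M$$(i,j) = M$$(j,i)"
  using assms by (metis index_transpose_mat(1) carrier_matD)

lemma eig_mono:
  fixes A B :: "real mat"
  assumes A: "A \<in> carrier_mat n n" and B: "B \<in> carrier_mat n n"
    and sA: "\<And>i j. i<n \<Longrightarrow> j<n \<Longrightarrow> A$$(i,j) = A$$(j,i)"
    and sB: "\<And>i j. i<n \<Longrightarrow> j<n \<Longrightarrow> B$$(i,j) = B$$(j,i)"
    and i: "1 \<le> i" "i \<le> n"
    and hyp: "\<And>x. x \<in> carrier_vec n \<Longrightarrow> x \<bullet> (A *\<^sub>v x) + c * (x \<bullet> x) \<le> x \<bullet> (B *\<^sub>v x)"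
  shows "eig A i + c \<le> eig B i"
proof -
  obtain vsA esA where ebA: "eigbasis A n vsA esA" using spectral[OF A sA] by blast
  obtain vsB esB where ebB: "eigbasis B n vsB esB" using spectral[OF B sB] by blast
  define lamA where "lamA = rev (sort esA) ! (i - 1)"
  obtain J where Jd: "distinct J" and Js: "set J \<subseteq> {..<n}" and lJ: "length J = i"
    and Jg: "\<And>l. l < i \<Longrightarrow> esA!(J!l) \<ge> lamA"
    using top_family[OF ebA i] unfolding lamA_def by blast
  define Y where "Y = mat_of_cols n (map (\<lambda>l. vsA!l) J)"
  have Y: "Y \<in> carrier_mat n i" unfolding Y_def using mat_of_cols_carrier(1)[of n "map (\<lambda>l. vsA!l) J"] lJ by simp
  have "lamA + c \<le> rev (sort esB) ! (i - 1)"
  proof (rule eig_lower[OF B ebB i Y])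
    fix a :: "real vec" assume a: "a \<in> carrier_vec i" and a0: "a \<noteq> 0\<^sub>v i"
    have a': "a \<in> carrier_vec (length J)" using a lJ by simp
    note se = sub_eig[OF ebA A Jd Js a', folded Y_def, unfolded lJ]
    define x where "x = Y *\<^sub>v a"
    have xc: "x \<in> carrier_vec n" unfolding x_def using Y a by simp
    have xx: "x \<bullet> x = (\<Sum>l<i. (a$l)^2)" unfolding x_def using se(2) .
    have pos: "(\<Sum>l<i. (a$l)^2) > 0" by (rule sumsq_pos[OF a a0])
    have x0: "x \<noteq> 0\<^sub>v n" using xx pos by auto
    have "lamA * (x \<bullet> x) = (\<Sum>l<i. lamA * (a$l)^2)" unfolding xx by (simp add: sum_distrib_left)
    also have "\<dots> \<le> (\<Sum>l<i. esA!(J!l) * (a$l)^2)"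
      by (rule sum_mono) (use Jg in \<open>auto intro: mult_right_mono\<close>)
    also have "\<dots> = x \<bullet> (A *\<^sub>v x)" unfolding x_def using se(3) by simp
    finally have "(lamA + c) * (x \<bullet> x) \<le> x \<bullet> (B *\<^sub>v x)" using hyp[OF xc] by (simp add: algebra_simps)
    then show "Y *\<^sub>v a \<noteq> 0\<^sub>v n \<and> (lamA + c) * ((Y *\<^sub>v a) \<bullet> (Y *\<^sub>v a)) \<le> (Y *\<^sub>v a) \<bullet> (B *\<^sub>v (Y *\<^sub>v a))"
      using x0 unfolding x_def by simp
  qed
  then show ?thesis using eig_eq[OF A ebA, of i] eig_eq[OF B ebB, of i] unfolding lamA_def by simp
qed

lemma eig_gram:
  fixes N :: "real mat"
  assumes N: "N \<in> carrier_mat n k" and i: "1 \<le> i" "i \<le> n" "i \<le> k"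
  shows "eig (transpose_mat N * N) i \<le> eig (N * transpose_mat N) i"
proof -
  define G where "G = transpose_mat N * N"
  define H where "H = N * transpose_mat N"
  have G: "G \<in> carrier_mat k k" unfolding G_def using N by simp
  have H: "H \<in> carrier_mat n n" unfolding H_def using N by simp
  have tG: "transpose_mat G = G" unfolding G_def using N by (simp add: transpose_mult)
  have tH: "transpose_mat H = H" unfolding H_def using N by (simp add: transpose_mult)
  obtain us mus where ebG: "eigbasis G k us mus" using spectral[OF G sym_transpose[OF G tG]] by blast
  obtain vs es where ebH: "eigbasis H n vs es" using spectral[OF H sym_transpose[OF H tH]] by blast
  define lam where "lam = rev (sort mus) ! (i - 1)"
  have eG: "eig G i = lam" unfolding lam_def by (rule eig_eq[OF G ebG])
  have eH: "eig H i = rev (sort es) ! (i - 1)" by (rule eig_eq[OF H ebH])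
  have les: "length es = n" using ebH unfolding eigbasis_def by simp
  have es_nonneg: "es!j \<ge> 0" if j: "j < n" for j
  proof -
    have vj: "vs!j \<in> carrier_vec n" using eigbasis_carrier[OF ebH j] .
    have "es!j = vs!j \<bullet> (es!j \<cdot>\<^sub>v vs!j)" using eigbasis_dot[OF ebH j j] vj by simp
    also have "\<dots> = vs!j \<bullet> (H *\<^sub>v vs!j)" using eigbasis_eq[OF ebH j] by simp
    also have "H *\<^sub>v vs!j = N *\<^sub>v (transpose_mat N *\<^sub>v vs!j)" unfolding H_def
      by (rule assoc_mult_mat_vec[of _ n k _ n]) (use N vj in auto)
    also have "vs!j \<bullet> \<dots> = (transpose_mat N *\<^sub>v vs!j) \<bullet> (transpose_mat N *\<^sub>v vs!j)"
      by (rule transpose_vec_mult_scalar[OF N, symmetric]) (use N vj in auto)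
    finally show ?thesis using dot_nonneg by simp
  qed
  have eHnn: "eig H i \<ge> 0" unfolding eH
  proof -
    have "i - 1 < length (rev (sort es))" using i les by simp
    hence "rev (sort es) ! (i - 1) \<in> set (rev (sort es))" by (rule nth_mem)
    hence "rev (sort es) ! (i - 1) \<in> set es" by simp
    then obtain j where j: "j < length es" "es!j = rev (sort es) ! (i - 1)"
      unfolding in_set_conv_nth by blast
    then show "rev (sort es) ! (i - 1) \<ge> 0" using es_nonneg[of j] les by simp
  qed
  show ?thesis
  proof (cases "lam \<le> 0")
    case True
    then show ?thesis using eG eHnn unfolding G_def H_def by simp
  next
    case False
    hence lam0: "lam > 0" by simp
    obtain J where Jd: "distinct J" and Js: "set J \<subseteq> {..<k}" and lJ: "length J = i"
      and Jg: "\<And>l. l < i \<Longrightarrow> mus!(J!l) \<ge> lam"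
      using top_family[OF ebG i(1) i(3)] unfolding lam_def by blast
    define U where "U = mat_of_cols k (map (\<lambda>l. us!l) J)"
    have U: "U \<in> carrier_mat k i" unfolding U_def using mat_of_cols_carrier(1)[of k "map (\<lambda>l. us!l) J"] lJ by simp
    define Y where "Y = N * U"
    have Y: "Y \<in> carrier_mat n i" unfolding Y_def using N U by simp
    have "lam \<le> rev (sort es) ! (i - 1)"
    proof (rule eig_lower[OF H ebH i(1) i(2) Y])
      fix a :: "real vec" assume a: "a \<in> carrier_vec i" and a0: "a \<noteq> 0\<^sub>v i"
      have a': "a \<in> carrier_vec (length J)" using a lJ by simp
      note se = sub_eig[OF ebG G Jd Js a', folded U_def, unfolded lJ]
      define d where "d = vec i (\<lambda>l. mus!(J!l) * a$l)"
      have d': "d \<in> carrier_vec (length J)" unfolding d_def using lJ by simp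
      note sd = sub_eig[OF ebG G Jd Js d', folded U_def, unfolded lJ]
      define y where "y = U *\<^sub>v a"
      have yc: "y \<in> carrier_vec k" unfolding y_def using U a by simp
      have Ya: "Y *\<^sub>v a = N *\<^sub>v y" unfolding Y_def y_def
        by (rule assoc_mult_mat_vec[of _ n k _ i]) (use N U a in auto)
      have Gy: "G *\<^sub>v y = U *\<^sub>v d" unfolding y_def d_def using se(4) .
      have NtN: "transpose_mat N *\<^sub>v (N *\<^sub>v y) = G *\<^sub>v y" unfolding G_def
        by (rule assoc_mult_mat_vec[symmetric, of _ k n _ k]) (use N yc in auto)
      have Gyc: "G *\<^sub>v y \<in> carrier_vec k" using G yc by simp
      have "(N *\<^sub>v y) \<bullet> (N *\<^sub>v y) = (transpose_mat N *\<^sub>v (N *\<^sub>v y)) \<bullet> y"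
        by (rule transpose_vec_mult_scalar[OF N yc, symmetric]) (use N yc in simp)
      also have "\<dots> = y \<bullet> (G *\<^sub>v y)" unfolding NtN by (rule comm_scalar_prod[OF Gyc yc])
      also have "\<dots> = (\<Sum>l<i. mus!(J!l) * (a$l)^2)" unfolding y_def using se(3) .
      finally have xx: "(N *\<^sub>v y) \<bullet> (N *\<^sub>v y) = (\<Sum>l<i. mus!(J!l) * (a$l)^2)" .
      have "(N *\<^sub>v y) \<bullet> (H *\<^sub>v (N *\<^sub>v y)) = (N *\<^sub>v y) \<bullet> (N *\<^sub>v (transpose_mat N *\<^sub>v (N *\<^sub>v y)))"
        unfolding H_def by (subst assoc_mult_mat_vec[of _ n k _ n]) (use N yc in auto)
      also have "\<dots> = (transpose_mat N *\<^sub>v (N *\<^sub>v y)) \<bullet> (transpose_mat N *\<^sub>v (N *\<^sub>v y))"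
        by (rule transpose_vec_mult_scalar[OF N, symmetric]) (use N yc in auto)
      also have "\<dots> = (U *\<^sub>v d) \<bullet> (U *\<^sub>v d)" unfolding NtN Gy ..
      also have "\<dots> = (\<Sum>l<i. (d$l)^2)" using sd(2) .
      also have "\<dots> = (\<Sum>l<i. (mus!(J!l) * a$l)^2)" unfolding d_def by simp
      finally have xHx: "(N *\<^sub>v y) \<bullet> (H *\<^sub>v (N *\<^sub>v y)) = (\<Sum>l<i. (mus!(J!l) * a$l)^2)" .
      have pos: "(\<Sum>l<i. (a$l)^2) > 0" by (rule sumsq_pos[OF a a0])
      have "lam * (\<Sum>l<i. (a$l)^2) = (\<Sum>l<i. lam * (a$l)^2)" by (simp add: sum_distrib_left)
      also have "\<dots> \<le> (\<Sum>l<i. mus!(J!l) * (a$l)^2)"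
        by (rule sum_mono) (use Jg in \<open>auto intro: mult_right_mono\<close>)
      finally have "(N *\<^sub>v y) \<bullet> (N *\<^sub>v y) > 0" using xx pos lam0
        by (smt (verit) mult_pos_pos)
      hence x0: "Y *\<^sub>v a \<noteq> 0\<^sub>v n" unfolding Ya by auto
      have "lam * (\<Sum>l<i. mus!(J!l) * (a$l)^2) = (\<Sum>l<i. lam * (mus!(J!l) * (a$l)^2))"
        by (simp add: sum_distrib_left)
      also have "\<dots> \<le> (\<Sum>l<i. (mus!(J!l) * a$l)^2)"
      proof (rule sum_mono)
        fix l assume "l \<in> {..<i}"
        hence g: "mus!(J!l) \<ge> lam" using Jg by simp
        have "lam * mus!(J!l) \<le> mus!(J!l) * mus!(J!l)" using g lam0 by (intro mult_right_mono) auto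
        hence "lam * mus!(J!l) * (a$l)^2 \<le> mus!(J!l) * mus!(J!l) * (a$l)^2"
          by (rule mult_right_mono) simp
        then show "lam * (mus!(J!l) * (a$l)^2) \<le> (mus!(J!l) * a$l)^2"
          by (simp add: power2_eq_square algebra_simps)
      qed
      finally have "lam * ((N *\<^sub>v y) \<bullet> (N *\<^sub>v y)) \<le> (N *\<^sub>v y) \<bullet> (H *\<^sub>v (N *\<^sub>v y))"
        unfolding xx xHx .
      then show "Y *\<^sub>v a \<noteq> 0\<^sub>v n \<and> lam * ((Y *\<^sub>v a) \<bullet> (Y *\<^sub>v a)) \<le> (Y *\<^sub>v a) \<bullet> (H *\<^sub>v (Y *\<^sub>v a))"
        using x0 unfolding Ya by simp
    qed
    then show ?thesis using eG eH unfolding G_def H_def by simp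
  qed
qed



lemma sum_ind: "finite A \<Longrightarrow> (\<Sum>j\<in>A. if P j then 1 else 0 :: real) = real (card {j\<in>A. P j})"
  using sum.inter_filter[of A "\<lambda>_. 1::real" P] by simp

lemma card_idx:
  assumes "distinct F"
  shows "card {j \<in> {0..<length F}. P (F!j)} = card {C \<in> set F. P C}"
proof -
  have "{C \<in> set F. P C} = (\<lambda>j. F!j) ` {j \<in> {0..<length F}. P (F!j)}"
    by (auto simp: in_set_conv_nth)
  moreover have "inj_on (\<lambda>j. F!j) {j \<in> {0..<length F}. P (F!j)}"
    using assms by (auto simp: inj_on_def nth_eq_iff_index_eq)
  ultimately show ?thesis by (simp add: card_image)
qed

lemma adj_entry: "i < n \<Longrightarrow> j < n \<Longrightarrow> adj_mat n E $$ (i,j) = (if {i,j} \<in> E then 1 else 0)"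
  unfolding adj_mat_def by simp

lemma adj_carrier: "adj_mat n E \<in> carrier_mat n n"
  unfolding adj_mat_def by simp

lemma adj_sym: "i < n \<Longrightarrow> j < n \<Longrightarrow> adj_mat n E $$ (i,j) = adj_mat n E $$ (j,i)"
  unfolding adj_mat_def by (simp add: insert_commute)

lemma pg_carrier: "partition_graph_adj F \<in> carrier_mat (length F) (length F)"
  unfolding partition_graph_adj_def by simp

lemma pg_sym: "i < length F \<Longrightarrow> j < length F \<Longrightarrow> partition_graph_adj F $$ (i,j) = partition_graph_adj F $$ (j,i)"
  unfolding partition_graph_adj_def by (auto simp: Int_commute)

lemma quad_diag:
  fixes A :: "real mat"
  assumes A: "A \<in> carrier_mat n n" and x: "x \<in> carrier_vec n"
  shows "x \<bullet> ((mat n n (\<lambda>(i,j). if i = j then d i else 0) + A) *\<^sub>v x) = (\<Sum>v<n. d v * (x$v)^2) + x \<bullet> (A *\<^sub>v x)"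
proof -
  let ?D = "mat n n (\<lambda>(i,j). if i = j then d i else 0)"
  have D: "?D \<in> carrier_mat n n" by simp
  have "(?D + A) *\<^sub>v x = ?D *\<^sub>v x + A *\<^sub>v x" by (rule add_mult_distrib_mat_vec[OF D A x])
  hence "x \<bullet> ((?D + A) *\<^sub>v x) = x \<bullet> (?D *\<^sub>v x) + x \<bullet> (A *\<^sub>v x)"
    using scalar_prod_add_distrib[of x n "?D *\<^sub>v x" "A *\<^sub>v x"] x D A by simp
  moreover have "?D *\<^sub>v x = vec n (\<lambda>v. d v * x$v)"
  proof (rule eq_vecI)
    fix v assume "v < dim_vec (vec n (\<lambda>v. d v * x$v))"
    hence v: "v < n" by simp
    have "row ?D v = d v \<cdot>\<^sub>v unit_vec n v" using v by (intro eq_vecI) (auto simp: unit_vec_def)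
    then show "(?D *\<^sub>v x) $ v = vec n (\<lambda>v. d v * x$v) $ v" using v x
      by (simp add: scalar_prod_left_unit)
  qed simp
  moreover have "x \<bullet> vec n (\<lambda>v. d v * x$v) = (\<Sum>v<n. d v * (x$v)^2)"
    using x by (simp add: scalar_prod_def atLeast0LessThan power2_eq_square mult.commute mult.left_commute)
  ultimately show ?thesis by simp
qed

lemma deg_ge_cd:
  assumes sg: "simple_graph n E" and cp: "clique_partition n E F"
  shows "clique_degree F v \<le> degree E v"
proof -
  let ?A = "{C \<in> set F. v \<in> C}"
  let ?B = "{u. {u, v} \<in> E}"
  have cl: "\<And>C. C \<in> set F \<Longrightarrow> C \<subseteq> {..<n} \<and> card C \<ge> 2 \<and> is_clique E C"
    and uq: "\<And>e. e \<in> E \<Longrightarrow> \<exists>!C. C \<in> set F \<and> e \<subseteq> C"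
    using cp unfolding clique_partition_def by auto
  define f where "f C = (SOME u. u \<in> C \<and> u \<noteq> v)" for C
  have fC: "f C \<in> C \<and> f C \<noteq> v" if "C \<in> set F" for C
  proof -
    have "card C \<ge> 2" using cl[OF that] by simp
    hence "\<exists>u. u \<in> C \<and> u \<noteq> v"
      by (metis card_2_iff' card_le_Suc0_iff_eq not_less_eq_eq numeral_2_eq_2 card.infinite
          le_zero_eq zero_neq_numeral)
    then show ?thesis unfolding f_def by (rule someI_ex)
  qed
  have fE: "{f C, v} \<in> E" if "C \<in> ?A" for C
    using cl[of C] fC[of C] that unfolding is_clique_def by auto
  have inj: "inj_on f ?A"
  proof (rule inj_onI)
    fix C C' assume C: "C \<in> ?A" and C': "C' \<in> ?A" and eq: "f C = f C'"
    have "{f C, v} \<in> E" using fE[OF C] .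
    from uq[OF this] have "\<exists>!D. D \<in> set F \<and> {f C, v} \<subseteq> D" .
    moreover have "C \<in> set F \<and> {f C, v} \<subseteq> C" using C fC[of C] by auto
    moreover have "C' \<in> set F \<and> {f C, v} \<subseteq> C'" using C' fC[of C'] eq by auto
    ultimately show "C = C'" by blast
  qed
  have sub: "f ` ?A \<subseteq> ?B" using fE by auto
  have finB: "finite ?B"
  proof (rule finite_subset)
    show "?B \<subseteq> {..<n}"
    proof
      fix u assume "u \<in> ?B"
      then obtain a b where "{u, v} = {a, b}" "a < n" "b < n" using sg unfolding simple_graph_def by blast
      then show "u \<in> {..<n}" by (auto simp: doubleton_eq_iff)
    qed
  qed simp
  have "card ?A \<le> card ?B" by (rule card_inj_on_le[OF inj sub finB])
  then show ?thesis unfolding clique_degree_def degree_def .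
qed

definition inc :: "nat \<Rightarrow> nat set list \<Rightarrow> real mat" where
  "inc n F = mat n (length F) (\<lambda>(v,j). if v \<in> F!j then 1 else 0)"

lemma inc_carrier: "inc n F \<in> carrier_mat n (length F)"
  unfolding inc_def by simp

lemma NNt_entry:
  assumes d: "distinct F" and u: "u < n" and w: "w < n"
  shows "(inc n F * transpose_mat (inc n F)) $$ (u,w) = real (card {C \<in> set F. u \<in> C \<and> w \<in> C})"
proof -
  let ?N = "inc n F"
  have "(?N * transpose_mat ?N) $$ (u,w) = row ?N u \<bullet> row ?N w"
    using u w inc_carrier[of n F] by simp
  also have "\<dots> = (\<Sum>j\<in>{0..<length F}. if u \<in> F!j \<and> w \<in> F!j then 1 else 0)"
    using u w unfolding inc_def scalar_prod_def by (intro sum.cong) auto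
  also have "\<dots> = real (card {j \<in> {0..<length F}. u \<in> F!j \<and> w \<in> F!j})"
    by (rule sum_ind) simp
  also have "card {j \<in> {0..<length F}. u \<in> F!j \<and> w \<in> F!j} = card {C \<in> set F. u \<in> C \<and> w \<in> C}"
    using card_idx[OF d, of "\<lambda>C. u \<in> C \<and> w \<in> C"] by simp
  finally show ?thesis .
qed

lemma NtN_entry:
  assumes cp: "clique_partition n E F" and j: "j < length F" and l: "l < length F"
  shows "(transpose_mat (inc n F) * inc n F) $$ (j,l) = real (card (F!j \<inter> F!l))"
proof -
  let ?N = "inc n F"
  have sub: "F!j \<subseteq> {..<n}" using cp j unfolding clique_partition_def by auto
  have "(transpose_mat ?N * ?N) $$ (j,l) = col ?N j \<bullet> col ?N l"
    using j l inc_carrier[of n F] by simp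
  also have "\<dots> = (\<Sum>v\<in>{0..<n}. if v \<in> F!j \<and> v \<in> F!l then 1 else 0)"
    using j l unfolding inc_def scalar_prod_def by (intro sum.cong) auto
  also have "\<dots> = real (card {v \<in> {0..<n}. v \<in> F!j \<and> v \<in> F!l})"
    by (rule sum_ind) simp
  also have "{v \<in> {0..<n}. v \<in> F!j \<and> v \<in> F!l} = F!j \<inter> F!l" using sub by auto
  finally show ?thesis .
qed

lemma NNt_eq:
  assumes sg: "simple_graph n E" and cp: "clique_partition n E F"
  shows "inc n F * transpose_mat (inc n F) =
    mat n n (\<lambda>(i,j). if i = j then real (clique_degree F i) else 0) + adj_mat n E"
proof (rule eq_matI)
  have d: "distinct F" using cp unfolding clique_partition_def by simp
  have cl: "\<And>C. C \<in> set F \<Longrightarrow> C \<subseteq> {..<n} \<and> card C \<ge> 2 \<and> is_clique E C"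
    and uq: "\<And>e. e \<in> E \<Longrightarrow> \<exists>!C. C \<in> set F \<and> e \<subseteq> C"
    using cp unfolding clique_partition_def by auto
  fix u w assume "u < dim_row (mat n n (\<lambda>(i,j). if i = j then real (clique_degree F i) else 0) + adj_mat n E)"
    "w < dim_col (mat n n (\<lambda>(i,j). if i = j then real (clique_degree F i) else 0) + adj_mat n E)"
  hence u: "u < n" and w: "w < n" by (auto simp: adj_mat_def)
  show "(inc n F * transpose_mat (inc n F)) $$ (u,w) =
    (mat n n (\<lambda>(i,j). if i = j then real (clique_degree F i) else 0) + adj_mat n E) $$ (u,w)"
  proof (cases "u = w")
    case True
    have "{u, u} \<notin> E" using sg unfolding simple_graph_def by (auto simp: doubleton_eq_iff)
    then show ?thesis using True NNt_entry[OF d u w] u adj_carrier[of n E]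
      by (simp add: adj_entry clique_degree_def)
  next
    case False
    have "card {C \<in> set F. u \<in> C \<and> w \<in> C} = (if {u,w} \<in> E then 1 else 0)"
    proof (cases "{u,w} \<in> E")
      case True
      then obtain C0 where C0: "C0 \<in> set F" "{u,w} \<subseteq> C0" and un: "\<And>C. C \<in> set F \<Longrightarrow> {u,w} \<subseteq> C \<Longrightarrow> C = C0"
        using uq[OF True] by blast
      have "{C \<in> set F. u \<in> C \<and> w \<in> C} = {C0}"
      proof (rule equalityI)
        show "{C \<in> set F. u \<in> C \<and> w \<in> C} \<subseteq> {C0}"
        proof
          fix C assume "C \<in> {C \<in> set F. u \<in> C \<and> w \<in> C}"
          then have "C \<in> set F" "{u,w} \<subseteq> C" by auto
          then show "C \<in> {C0}" using un by simp
        qed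
        show "{C0} \<subseteq> {C \<in> set F. u \<in> C \<and> w \<in> C}" using C0 by simp
      qed
      then show ?thesis using True by simp
    next
      case nE: False
      have "\<not> (u \<in> C \<and> w \<in> C)" if "C \<in> set F" for C
      proof
        assume "u \<in> C \<and> w \<in> C"
        moreover have "is_clique E C" using cl[OF that] by simp
        ultimately have "{u,w} \<in> E" using False unfolding is_clique_def by blast
        then show False using nE by simp
      qed
      hence "{C \<in> set F. u \<in> C \<and> w \<in> C} = {}" by blast
      then show ?thesis using nE by simp
    qed
    then show ?thesis using False NNt_entry[OF d u w] u w adj_carrier[of n E]
      by (simp add: adj_entry)
  qed
qed (auto simp: adj_mat_def inc_def)

lemma NtN_eq:
  assumes cp: "clique_partition n E F" and cu: "clique_uniform F s"
  shows "transpose_mat (inc n F) * inc n F =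
    mat (length F) (length F) (\<lambda>(i,j). if i = j then real s else 0) + partition_graph_adj F"
proof (rule eq_matI)
  have d: "distinct F" using cp unfolding clique_partition_def by simp
  have cl: "\<And>C. C \<in> set F \<Longrightarrow> C \<subseteq> {..<n} \<and> card C \<ge> 2 \<and> is_clique E C"
    and uq: "\<And>e. e \<in> E \<Longrightarrow> \<exists>!C. C \<in> set F \<and> e \<subseteq> C"
    using cp unfolding clique_partition_def by auto
  let ?k = "length F"
  fix j l assume "j < dim_row (mat ?k ?k (\<lambda>(i,j). if i = j then real s else 0) + partition_graph_adj F)"
    "l < dim_col (mat ?k ?k (\<lambda>(i,j). if i = j then real s else 0) + partition_graph_adj F)"
  hence j: "j < ?k" and l: "l < ?k" by (auto simp: partition_graph_adj_def)
  have Fj: "F!j \<in> set F" and Fl: "F!l \<in> set F" using j l by auto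
  show "(transpose_mat (inc n F) * inc n F) $$ (j,l) =
    (mat ?k ?k (\<lambda>(i,j). if i = j then real s else 0) + partition_graph_adj F) $$ (j,l)"
  proof (cases "j = l")
    case True
    then show ?thesis using NtN_entry[OF cp j l] j cu Fj unfolding clique_uniform_def
      by (simp add: partition_graph_adj_def)
  next
    case False
    have ne: "F!j \<noteq> F!l" using False d j l by (simp add: nth_eq_iff_index_eq)
    have fin: "finite (F!j \<inter> F!l)" using cl[OF Fj] by (meson finite_Int finite_nat_iff_bounded)
    have le1: "card (F!j \<inter> F!l) \<le> 1"
    proof -
      have "\<forall>a\<in>F!j \<inter> F!l. \<forall>b\<in>F!j \<inter> F!l. a = b"
      proof (intro ballI, rule ccontr)
        fix a b assume a: "a \<in> F!j \<inter> F!l" and b: "b \<in> F!j \<inter> F!l" and ab: "a \<noteq> b"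
        have "{a,b} \<in> E" using cl[OF Fj] a b ab unfolding is_clique_def by auto
        from uq[OF this] have "\<exists>!C. C \<in> set F \<and> {a,b} \<subseteq> C" .
        then show False using Fj Fl a b ne by blast
      qed
      then show ?thesis using card_le_Suc0_iff_eq[OF fin] by simp
    qed
    have "card (F!j \<inter> F!l) = (if F!j \<inter> F!l \<noteq> {} then 1 else 0)"
    proof (cases "F!j \<inter> F!l = {}")
      case False
      then have "card (F!j \<inter> F!l) > 0" using fin by (simp add: card_gt_0_iff)
      then show ?thesis using le1 False by simp
    qed simp
    then show ?thesis using False NtN_entry[OF cp j l] j l
      by (simp add: partition_graph_adj_def)
  qed
qed (auto simp: partition_graph_adj_def inc_def)



lemma x_sq_sum: "(x :: real vec) \<in> carrier_vec n \<Longrightarrow> x \<bullet> x = (\<Sum>v<n. (x$v)^2)"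
  by (simp add: scalar_prod_def atLeast0LessThan power2_eq_square)

theorem mainTheorem8:
  fixes n k i t s :: nat and E :: "nat set set" and F :: "nat set list"
  assumes "simple_graph n E"
    and "clique_partition n E F"
    and "length F = k"
    and "1 \<le> i" and "i \<le> min n k"
  shows "(clique_regular n F t \<longrightarrow>
            eig (signless_laplacian n E) i - eig (adj_mat n E) i \<ge> real t)
       \<and> (clique_uniform F s \<longrightarrow>
            eig (signless_laplacian n E) i - eig (partition_graph_adj F) i \<ge> real s)"
proof -
  note sg = assms(1) and cp = assms(2)
  have i1: "1 \<le> i" and i2: "i \<le> n" and i3: "i \<le> k" using assms by auto
  define A where "A = adj_mat n E"
  define Q where "Q = signless_laplacian n E"
  define Dd where "Dd = mat n n (\<lambda>(i,j). if i = j then real (degree E i) else 0)"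
  have Ac: "A \<in> carrier_mat n n" unfolding A_def by (rule adj_carrier)
  have Qeq: "Q = Dd + A" unfolding Q_def Dd_def A_def signless_laplacian_def deg_mat_def ..
  have Qc: "Q \<in> carrier_mat n n" unfolding Qeq Dd_def using Ac by simp
  have Asym: "\<And>a b. a < n \<Longrightarrow> b < n \<Longrightarrow> A$$(a,b) = A$$(b,a)" unfolding A_def by (rule adj_sym)
  have Qsym: "Q$$(a,b) = Q$$(b,a)" if "a < n" "b < n" for a b
    unfolding Qeq Dd_def using that Ac Asym[OF that] by simp
  have quadQ: "x \<bullet> (Q *\<^sub>v x) = (\<Sum>v<n. real (degree E v) * (x$v)^2) + x \<bullet> (A *\<^sub>v x)"
    if "x \<in> carrier_vec n" for x
    unfolding Qeq Dd_def by (rule quad_diag[OF Ac that])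
  have degge: "real (clique_degree F v) \<le> real (degree E v)" for v
    using deg_ge_cd[OF sg cp] by simp
  show ?thesis
  proof (intro conjI impI)
    assume reg: "clique_regular n F t"
    have "eig A i + real t \<le> eig Q i"
    proof (rule eig_mono[OF Ac Qc Asym Qsym i1 i2])
      fix x :: "real vec" assume x: "x \<in> carrier_vec n"
      have "real t * (x \<bullet> x) = (\<Sum>v<n. real t * (x$v)^2)" using x_sq_sum[OF x] by (simp add: sum_distrib_left)
      also have "\<dots> \<le> (\<Sum>v<n. real (degree E v) * (x$v)^2)"
      proof (rule sum_mono)
        fix v assume "v \<in> {..<n}"
        hence "clique_degree F v = t" using reg unfolding clique_regular_def by simp
        hence "real t \<le> real (degree E v)" using degge[of v] by simp
        then show "real t * (x$v)^2 \<le> real (degree E v) * (x$v)^2" by (rule mult_right_mono) simp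
      qed
      finally show "x \<bullet> (A *\<^sub>v x) + real t * (x \<bullet> x) \<le> x \<bullet> (Q *\<^sub>v x)" using quadQ[OF x] by simp
    qed
    then show "eig (signless_laplacian n E) i - eig (adj_mat n E) i \<ge> real t"
      unfolding Q_def A_def by simp
  next
    assume cu: "clique_uniform F s"
    define N where "N = inc n F"
    define P where "P = partition_graph_adj F"
    have Nc: "N \<in> carrier_mat n k" unfolding N_def using inc_carrier[of n F] assms(3) by simp
    have Pc: "P \<in> carrier_mat k k" unfolding P_def using pg_carrier[of F] assms(3) by simp
    have Psym: "\<And>a b. a < k \<Longrightarrow> b < k \<Longrightarrow> P$$(a,b) = P$$(b,a)" unfolding P_def using pg_sym assms(3) by metis
    define G where "G = transpose_mat N * N"
    define H where "H = N * transpose_mat N"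
    have Gc: "G \<in> carrier_mat k k" unfolding G_def using Nc by simp
    have Hc: "H \<in> carrier_mat n n" unfolding H_def using Nc by simp
    have Gsym: "\<And>a b. a < k \<Longrightarrow> b < k \<Longrightarrow> G$$(a,b) = G$$(b,a)"
      by (rule sym_transpose[OF Gc]) (use Nc in \<open>simp_all add: G_def transpose_mult\<close>)
    have Hsym: "\<And>a b. a < n \<Longrightarrow> b < n \<Longrightarrow> H$$(a,b) = H$$(b,a)"
      by (rule sym_transpose[OF Hc]) (use Nc in \<open>simp_all add: H_def transpose_mult\<close>)
    have Geq: "G = mat k k (\<lambda>(i,j). if i = j then real s else 0) + P"
      unfolding G_def N_def P_def using NtN_eq[OF cp cu] assms(3) by simp
    have Heq: "H = mat n n (\<lambda>(i,j). if i = j then real (clique_degree F i) else 0) + A"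
      unfolding H_def N_def A_def using NNt_eq[OF sg cp] by simp
    have step1: "eig P i + real s \<le> eig G i"
    proof (rule eig_mono[OF Pc Gc Psym Gsym i1 i3])
      fix x :: "real vec" assume x: "x \<in> carrier_vec k"
      have "x \<bullet> (G *\<^sub>v x) = (\<Sum>v<k. real s * (x$v)^2) + x \<bullet> (P *\<^sub>v x)"
        unfolding Geq by (rule quad_diag[OF Pc x])
      also have "(\<Sum>v<k. real s * (x$v)^2) = real s * (x \<bullet> x)"
        using x_sq_sum[OF x] by (simp add: sum_distrib_left)
      finally show "x \<bullet> (P *\<^sub>v x) + real s * (x \<bullet> x) \<le> x \<bullet> (G *\<^sub>v x)" by simp
    qed
    have step2: "eig G i \<le> eig H i" unfolding G_def H_def by (rule eig_gram[OF Nc i1 i2 i3])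
    have step3: "eig H i + 0 \<le> eig Q i"
    proof (rule eig_mono[OF Hc Qc Hsym Qsym i1 i2])
      fix x :: "real vec" assume x: "x \<in> carrier_vec n"
      have "x \<bullet> (H *\<^sub>v x) = (\<Sum>v<n. real (clique_degree F v) * (x$v)^2) + x \<bullet> (A *\<^sub>v x)"
        unfolding Heq by (rule quad_diag[OF Ac x])
      also have "(\<Sum>v<n. real (clique_degree F v) * (x$v)^2) \<le> (\<Sum>v<n. real (degree E v) * (x$v)^2)"
        by (rule sum_mono) (use degge in \<open>auto intro: mult_right_mono\<close>)
      finally show "x \<bullet> (H *\<^sub>v x) + 0 * (x \<bullet> x) \<le> x \<bullet> (Q *\<^sub>v x)" using quadQ[OF x] by simp
    qed
    show "eig (signless_laplacian n E) i - eig (partition_graph_adj F) i \<ge> real s"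
      using step1 step2 step3 unfolding Q_def P_def by simp
  qed
qed

end
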